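(* Let $K$ be a compact subset of $\mathbb R^d$, let $\mu\in\mathcal P(K)$ and let $q\in\mathbb R$. Then for any $\tau\in(\underline D_\mu(q),\overline D_\mu(q))$ there exists a sequence $(r_n)$ of positive numbers tending to $0$ such that $\frac{\log I_\mu(r_n,q)}{(q-1)\log r_n}\to\tau$ when $q\ne1$, and $\frac{I_\mu(r_n,1)}{\log r_n}\to\tau$ when $q=1$.
   Context: $\mathcal P(K)$ is the set of Borel probability measures on $K$; $B(x,r)$ is the open ball. For $q\ne1$: $I_\mu(r,q)=\int_K\mu(B(x,r))^{q-1}d\mu(x)$, $\underline D_\mu(q)=\liminf_{r\to0}\frac{\log I_\mu(r,q)}{(q-1)\log r}$, $\overline D_\mu(q)$ the $\limsup$. For $q=1$: $I_\mu(r,1)=\int_K\log\mu(B(x,r))d\mu(x)$, $\underline D_\mu(1)=\liminf_{r\to0}\frac{I_\mu(r,1)}{\log r}$, $\overline D_\mu(1)$ the $\limsup$. *)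

theory Defs
  imports "HOL-Probability.Probability"
begin

definition ball_mass :: "'a::metric_space measure \<Rightarrow> 'a \<Rightarrow> real \<Rightarrow> real" where
  "ball_mass M x r = measure M (ball x r \<inter> space M)"

definition I_mu :: "'a::metric_space measure \<Rightarrow> real \<Rightarrow> real \<Rightarrow> real" where
  "I_mu M r q = (if q = 1 then (\<integral>x. ln (ball_mass M x r) \<partial>M)
                 else (\<integral>x. (ball_mass M x r) powr (q - 1) \<partial>M))"

definition dim_quot :: "'a::metric_space measure \<Rightarrow> real \<Rightarrow> real \<Rightarrow> real" where
  "dim_quot M q r = (if q = 1 then I_mu M r 1 / ln r
                     else ln (I_mu M r q) / ((q - 1) * ln r))"

definition lower_D :: "'a::metric_space measure \<Rightarrow> real \<Rightarrow> ereal" where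
  "lower_D M q = Liminf (at_right 0) (\<lambda>r. ereal (dim_quot M q r))"

definition upper_D :: "'a::metric_space measure \<Rightarrow> real \<Rightarrow> ereal" where
  "upper_D M q = Limsup (at_right 0) (\<lambda>r. ereal (dim_quot M q r))"

end

theory Submission
  imports Defs
begin


lemma space_eqK:
  assumes "sets M = sets (restrict_space borel K)"
  shows "space M = K"
  using sets_eq_imp_space_eq[OF assms] by (simp add: space_restrict_space)

lemma open_in_sets:
  assumes "sets M = sets (restrict_space borel K)" "open U"
  shows "U \<inter> space M \<in> sets M"
proof -
  have "U \<inter> K \<in> sets (restrict_space borel K)"
    using assms(2) by (auto simp: sets_restrict_space)
  thus ?thesis using assms space_eqK[OF assms(1)] by (simp add: Int_commute)
qed

lemma id_meas:
  assumes "sets M = sets (restrict_space borel K)"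
  shows "(\<lambda>x. x) \<in> measurable M borel"
proof (rule measurableI)
  fix A :: "'a set" assume "A \<in> sets borel"
  hence "A \<inter> K \<in> sets (restrict_space borel K)"
    by (auto simp: sets_restrict_space)
  thus "(\<lambda>x. x) -` A \<inter> space M \<in> sets M"
    using assms space_eqK[OF assms] by (simp add: Int_commute)
qed auto

lemma ball_mass_meas:
  fixes M :: "'a::euclidean_space measure"
  assumes "prob_space M" "sets M = sets (restrict_space borel K)"
  shows "(\<lambda>x. ball_mass M x r) \<in> borel_measurable M"
proof -
  interpret prob_space M by fact
  have idm: "(\<lambda>x. x) \<in> measurable M borel" by (rule id_meas[OF assms(2)])
  have "(\<lambda>p. dist (fst p) (snd p)) \<in> borel_measurable (M \<Otimes>\<^sub>M M)"
    using idm by measurable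
  hence Q: "{p \<in> space (M \<Otimes>\<^sub>M M). dist (fst p) (snd p) < r} \<in> sets (M \<Otimes>\<^sub>M M)"
    by measurable
  have "(\<lambda>x. emeasure M (Pair x -` {p \<in> space (M \<Otimes>\<^sub>M M). dist (fst p) (snd p) < r})) \<in> borel_measurable M"
    by (rule measurable_emeasure_Pair[OF Q])
  hence m: "(\<lambda>x. enn2real (emeasure M (Pair x -` {p \<in> space (M \<Otimes>\<^sub>M M). dist (fst p) (snd p) < r}))) \<in> borel_measurable M"
    by measurable
  show ?thesis
  proof (rule measurable_cong[THEN iffD1, OF _ m])
    fix x assume x: "x \<in> space M"
    have "Pair x -` {p \<in> space (M \<Otimes>\<^sub>M M). dist (fst p) (snd p) < r} = ball x r \<inter> space M"
      using x by (auto simp: space_pair_measure dist_commute)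
    thus "enn2real (emeasure M (Pair x -` {p \<in> space (M \<Otimes>\<^sub>M M). dist (fst p) (snd p) < r})) = ball_mass M x r"
      by (simp add: ball_mass_def measure_def)
  qed
qed



lemma ball_mass_lower:
  fixes M :: "'a::euclidean_space measure"
  assumes "compact K" "prob_space M" "sets M = sets (restrict_space borel K)" "r > 0"
  shows "\<exists>c>0. AE x in M. c \<le> ball_mass M x r"
proof -
  interpret prob_space M by fact
  have sp: "space M = K" by (rule space_eqK[OF assms(3)])
  have "K \<subseteq> (\<Union>y\<in>K. ball y (r/2))" using assms(4) by auto
  then obtain Y where Y: "Y \<subseteq> K" "finite Y" "K \<subseteq> (\<Union>y\<in>Y. ball y (r/2))"
    using compactE_image[OF assms(1), of K "\<lambda>y. ball y (r/2)"] by auto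
  define m where "m y = measure M (ball y (r/2) \<inter> space M)" for y
  define c where "c = Min (insert 1 (m ` {y\<in>Y. m y > 0}))"
  have cpos: "c > 0"
  proof -
    have fin: "finite (insert 1 (m ` {y\<in>Y. m y > 0}))" using Y(2) by simp
    have "c \<in> insert 1 (m ` {y\<in>Y. m y > 0})" unfolding c_def
      by (rule Min_in[OF fin]) simp
    thus ?thesis by auto
  qed
  define Z where "Z = (\<Union>y\<in>{y\<in>Y. m y = 0}. ball y (r/2) \<inter> space M)"
  have Zn: "Z \<in> null_sets M" unfolding Z_def
  proof (rule null_sets_UN')
    show "countable {y \<in> Y. m y = 0}" using Y(2) by (simp add: countable_finite)
    fix y assume "y \<in> {y \<in> Y. m y = 0}"
    hence m0: "measure M (ball y (r/2) \<inter> space M) = 0" by (simp add: m_def)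
    have ms: "ball y (r/2) \<inter> space M \<in> sets M"
      using open_in_sets[OF assms(3), of "ball y (r/2)"] by simp
    show "ball y (r / 2) \<inter> space M \<in> null_sets M"
      by (rule null_setsI[OF _ ms]) (simp add: emeasure_eq_measure m0)
  qed
  have "AE x in M. c \<le> ball_mass M x r"
  proof (rule AE_I'[OF Zn], safe)
    fix x assume x: "x \<in> space M" and nc: "\<not> c \<le> ball_mass M x r"
    from x Y(3) sp obtain y where y: "y \<in> Y" "x \<in> ball y (r/2)" by auto
    have sub: "ball y (r/2) \<subseteq> ball x r"
    proof
      fix z assume "z \<in> ball y (r/2)"
      hence "dist y z < r/2" by simp
      moreover have "dist x y < r/2" using y(2) by (simp add: dist_commute)
      ultimately have "dist x z < r" using dist_triangle[of x z y] by linarith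
      thus "z \<in> ball x r" by simp
    qed
    have "m y \<le> ball_mass M x r" unfolding m_def ball_mass_def
      using sub open_in_sets[OF assms(3), of "ball x r"]
      by (intro finite_measure_mono) auto
    show "x \<in> Z"
    proof (cases "m y = 0")
      case True thus ?thesis using y x unfolding Z_def by auto
    next
      case False
      hence "m y > 0" unfolding m_def by (simp add: order_neq_le_trans)
      hence "c \<le> m y" unfolding c_def using y Y(2) by (intro Min_le) auto
      thus ?thesis using nc \<open>m y \<le> ball_mass M x r\<close> by simp
    qed
  qed
  thus ?thesis using cpos by blast
qed

lemma ball_mass_le1:
  assumes "prob_space M" shows "ball_mass M x r \<le> 1" "0 \<le> ball_mass M x r"
  using prob_space.prob_le_1[OF assms] by (auto simp: ball_mass_def)

lemma ball_mass_mono: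
  fixes M :: "'a::euclidean_space measure"
  assumes "prob_space M" "sets M = sets (restrict_space borel K)" "r \<le> t"
  shows "ball_mass M x r \<le> ball_mass M x t"
proof -
  interpret prob_space M by fact
  show ?thesis unfolding ball_mass_def
    using open_in_sets[OF assms(2), of "ball x t"] assms(3)
    by (intro finite_measure_mono) auto
qed



lemma crossing:
  fixes G :: "real \<Rightarrow> real"
  assumes mono: "\<And>r t. 0 < r \<Longrightarrow> r \<le> t \<Longrightarrow> G r \<le> G t"
    and ab: "0 < a" "a < b" and pa: "G a - \<tau> * ln a > 0" and pb: "G b - \<tau> * ln b < 0"
    and e: "\<epsilon> > 0"
  shows "\<exists>r. a \<le> r \<and> r \<le> b \<and> \<bar>G r - \<tau> * ln r\<bar> \<le> \<epsilon>"
proof (rule ccontr)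
  assume nf: "\<not> ?thesis"
  define \<phi> where "\<phi> r = G r - \<tau> * ln r" for r
  define l where "l = exp (\<epsilon> / (\<bar>\<tau>\<bar> + 1))"
  have l1: "l > 1" unfolding l_def using e by (simp add: add_pos_nonneg)
  have lnl: "\<bar>\<tau>\<bar> * ln l < \<epsilon>"
  proof -
    have "\<bar>\<tau>\<bar> * ln l = \<bar>\<tau>\<bar> * \<epsilon> / (\<bar>\<tau>\<bar> + 1)" unfolding l_def by simp
    also have "\<dots> < \<epsilon>" using e by (simp add: field_simps)
    finally show ?thesis .
  qed
  define x where "x k = min (a * l ^ k) b" for k
  have xpos: "x k > 0" for k unfolding x_def using ab l1 by simp
  have xab: "a \<le> x k \<and> x k \<le> b" for k
    unfolding x_def using ab l1 by (auto simp: one_le_power)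
  have step: "x k \<le> x (Suc k) \<and> x (Suc k) \<le> l * x k" for k
  proof -
    have "a * l ^ k \<le> a * l ^ Suc k" using ab l1 by simp
    moreover have "min (a * l ^ Suc k) b \<le> l * min (a * l ^ k) b"
    proof -
      have "b \<le> l * b" using ab l1 by simp
      moreover have "a * l ^ k \<le> a * (l * l ^ k)" using ab l1 by simp
      moreover have "l * (a * l ^ k) = a * l ^ Suc k" by simp
      ultimately show ?thesis unfolding min_def
        by (smt (verit) mult_left_mono l1)
    qed
    ultimately show ?thesis unfolding x_def by (auto simp: min_def)
  qed
  have big: "\<phi> (x k) > \<epsilon>" for k
  proof (induction k)
    case 0
    have "x 0 = a" unfolding x_def using ab by simp
    thus ?case using pa nf xab[of 0] unfolding \<phi>_def by force
  next
    case (Suc k)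
    have "G (x k) \<le> G (x (Suc k))" using mono xpos step by blast
    moreover have "ln (x (Suc k)) - ln (x k) \<le> ln l"
    proof -
      have "ln (x (Suc k)) \<le> ln (l * x k)" using step[of k] xpos[of "Suc k"] by (intro ln_mono) auto
      moreover have "ln (l * x k) = ln l + ln (x k)" using xpos[of k] l1 by (simp add: ln_mult)
      ultimately show ?thesis by linarith
    qed
    moreover have "ln (x k) \<le> ln (x (Suc k))" using step[of k] xpos[of k] by (intro ln_mono) auto
    ultimately have "\<phi> (x (Suc k)) \<ge> \<phi> (x k) - \<bar>\<tau>\<bar> * ln l" unfolding \<phi>_def
    proof -
      assume a1: "G (x k) \<le> G (x (Suc k))" and a2: "ln (x (Suc k)) - ln (x k) \<le> ln l"
        and a3: "ln (x k) \<le> ln (x (Suc k))"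
      have "\<tau> * (ln (x (Suc k)) - ln (x k)) \<le> \<bar>\<tau>\<bar> * (ln (x (Suc k)) - ln (x k))"
        using a3 by (intro mult_right_mono) auto
      also have "\<dots> \<le> \<bar>\<tau>\<bar> * ln l" using a2 by (intro mult_left_mono) auto
      finally show "G (x k) - \<tau> * ln (x k) - \<bar>\<tau>\<bar> * ln l \<le> G (x (Suc k)) - \<tau> * ln (x (Suc k))"
        using a1 by (simp add: algebra_simps)
    qed
    hence "\<phi> (x (Suc k)) > 0" using Suc.IH lnl by linarith
    thus ?case using nf xab[of "Suc k"] unfolding \<phi>_def by force
  qed
  obtain k where k: "b / a < l ^ k" using real_arch_pow[OF l1] by blast
  hence "b < a * l ^ k" using ab by (simp add: field_simps)
  hence "x k = b" unfolding x_def by simp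
  thus False using big[of k] pb e unfolding \<phi>_def by simp
qed

lemma freq_up:
  fixes f :: "real \<Rightarrow> real"
  assumes "ereal \<tau> < Limsup (at_right 0) (\<lambda>r. ereal (f r))" "\<delta> > 0"
  shows "\<exists>b. 0 < b \<and> b < \<delta> \<and> f b > \<tau>"
proof (rule ccontr)
  assume "\<not> ?thesis"
  hence "eventually (\<lambda>r. ereal (f r) \<le> ereal \<tau>) (at_right 0)"
    unfolding eventually_at_right_field using assms(2) by (auto intro!: exI[of _ \<delta>])
  hence "Limsup (at_right 0) (\<lambda>r. ereal (f r)) \<le> ereal \<tau>"
    by (intro Limsup_bounded) auto
  thus False using assms(1) by simp
qed

lemma freq_lo:
  fixes f :: "real \<Rightarrow> real"
  assumes "Liminf (at_right 0) (\<lambda>r. ereal (f r)) < ereal \<tau>" "\<delta> > 0"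
  shows "\<exists>b. 0 < b \<and> b < \<delta> \<and> f b < \<tau>"
proof (rule ccontr)
  assume "\<not> ?thesis"
  hence "eventually (\<lambda>r. ereal \<tau> \<le> ereal (f r)) (at_right 0)"
    unfolding eventually_at_right_field using assms(2) by (auto intro!: exI[of _ \<delta>])
  hence "ereal \<tau> \<le> Liminf (at_right 0) (\<lambda>r. ereal (f r))"
    by (intro Liminf_bounded) auto
  thus False using assms(1) by simp
qed

lemma abstract_seq:
  fixes G :: "real \<Rightarrow> real"
  assumes mono: "\<And>r t. 0 < r \<Longrightarrow> r \<le> t \<Longrightarrow> G r \<le> G t"
    and lo: "Liminf (at_right 0) (\<lambda>r. ereal (G r / ln r)) < ereal \<tau>"
    and up: "ereal \<tau> < Limsup (at_right 0) (\<lambda>r. ereal (G r / ln r))"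
  shows "\<exists>r::nat\<Rightarrow>real. (\<forall>n. 0 < r n) \<and> r \<longlonglongrightarrow> 0 \<and> (\<lambda>n. G (r n) / ln (r n)) \<longlonglongrightarrow> \<tau>"
proof -
  have ex: "\<exists>r. 0 < r \<and> r < inverse (real (Suc n)) \<and> \<bar>G r / ln r - \<tau>\<bar> \<le> inverse (real (Suc n))" for n
  proof -
    define \<delta> where "\<delta> = min (inverse (real (Suc n))) (exp (-1))"
    have dpos: "\<delta> > 0" unfolding \<delta>_def by simp
    obtain b where b: "0 < b" "b < \<delta>" "G b / ln b > \<tau>" using freq_up[OF up dpos] by blast
    obtain a where a: "0 < a" "a < b" "G a / ln a < \<tau>" using freq_lo[OF lo b(1)] by blast
    have lnneg: "ln r < -1" if "0 < r" "r < \<delta>" for r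
    proof -
      have "r < exp (-1)" using that unfolding \<delta>_def by simp
      hence "ln r < ln (exp (-1))" using that by (intro ln_less_cancel_iff[THEN iffD2]) auto
      thus ?thesis by simp
    qed
    have la: "ln a < 0" using lnneg[of a] a b by linarith
    have lb: "ln b < 0" using lnneg[of b] b by linarith
    have pa: "G a - \<tau> * ln a > 0"
    proof -
      have "G a > \<tau> * ln a" using a(3) la by (simp add: divide_less_eq)
      thus ?thesis by simp
    qed
    have pb: "G b - \<tau> * ln b < 0"
    proof -
      have "G b < \<tau> * ln b" using b(3) lb by (simp add: less_divide_eq)
      thus ?thesis by simp
    qed
    obtain r where r: "a \<le> r" "r \<le> b" "\<bar>G r - \<tau> * ln r\<bar> \<le> inverse (real (Suc n))"
      using crossing[OF mono a(1) a(2) pa pb, of "inverse (real (Suc n))"] by auto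
    have r0: "0 < r" "r < \<delta>" using r a b by auto
    have lr: "ln r < -1" by (rule lnneg[OF r0])
    have "G r / ln r - \<tau> = (G r - \<tau> * ln r) / ln r" using lr by (simp add: field_simps)
    hence "\<bar>G r / ln r - \<tau>\<bar> = \<bar>G r - \<tau> * ln r\<bar> / \<bar>ln r\<bar>" by (simp add: abs_divide)
    also have "\<dots> \<le> \<bar>G r - \<tau> * ln r\<bar>"
    proof -
      have "1 \<le> \<bar>ln r\<bar>" using lr by simp
      hence "\<bar>G r - \<tau> * ln r\<bar> * 1 \<le> \<bar>G r - \<tau> * ln r\<bar> * \<bar>ln r\<bar>" by (intro mult_left_mono) auto
      moreover have "\<bar>ln r\<bar> > 0" using lr by simp
      ultimately show ?thesis by (subst pos_divide_le_eq) (auto simp: mult.commute)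
    qed
    finally have "\<bar>G r / ln r - \<tau>\<bar> \<le> inverse (real (Suc n))" using r(3) by linarith
    moreover have "r < inverse (real (Suc n))" using r0 unfolding \<delta>_def by simp
    ultimately show ?thesis using r0 by blast
  qed
  then obtain r where r: "\<And>n. 0 < r n \<and> r n < inverse (real (Suc n)) \<and> \<bar>G (r n) / ln (r n) - \<tau>\<bar> \<le> inverse (real (Suc n))"
    by metis
  have lim0: "(\<lambda>n. inverse (real (Suc n))) \<longlonglongrightarrow> 0" by (rule LIMSEQ_inverse_real_of_nat)
  have "r \<longlonglongrightarrow> 0"
    by (rule tendsto_sandwich[of "\<lambda>_. 0" _ _ "\<lambda>n. inverse (real (Suc n))"])
       (use r lim0 in \<open>auto intro: always_eventually less_imp_le\<close>)
  moreover have "(\<lambda>n. G (r n) / ln (r n)) \<longlonglongrightarrow> \<tau>"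
  proof (rule tendsto_sandwich[of "\<lambda>n. \<tau> - inverse (real (Suc n))" _ _ "\<lambda>n. \<tau> + inverse (real (Suc n))"])
    show "\<forall>\<^sub>F n in sequentially. \<tau> - inverse (real (Suc n)) \<le> G (r n) / ln (r n)"
      using r by (intro always_eventually allI) (smt (verit))
    show "\<forall>\<^sub>F n in sequentially. G (r n) / ln (r n) \<le> \<tau> + inverse (real (Suc n))"
      using r by (intro always_eventually allI) (smt (verit))
    show "(\<lambda>n. \<tau> - inverse (real (Suc n))) \<longlonglongrightarrow> \<tau>"
      using tendsto_diff[OF tendsto_const lim0, of \<tau>] by simp
    show "(\<lambda>n. \<tau> + inverse (real (Suc n))) \<longlonglongrightarrow> \<tau>"
      using tendsto_add[OF tendsto_const lim0, of \<tau>] by simp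
  qed
  ultimately show ?thesis using r by blast
qed



lemma G_mono:
  fixes M :: "'a::euclidean_space measure"
  assumes K: "compact K" and P: "prob_space M" and S: "sets M = sets (restrict_space borel K)"
    and rt: "0 < r" "r \<le> t"
  shows "(if q = 1 then I_mu M r 1 else ln (I_mu M r q) / (q - 1))
         \<le> (if q = 1 then I_mu M t 1 else ln (I_mu M t q) / (q - 1))"
proof -
  interpret prob_space M by fact
  obtain c where c: "c > 0" "AE x in M. c \<le> ball_mass M x r"
    using ball_mass_lower[OF K P S rt(1)] by blast
  have mr: "(\<lambda>x. ball_mass M x r) \<in> borel_measurable M" by (rule ball_mass_meas[OF P S])
  have mt: "(\<lambda>x. ball_mass M x t) \<in> borel_measurable M" by (rule ball_mass_meas[OF P S])
  have le1: "\<And>x s. ball_mass M x s \<le> 1" and ge0: "\<And>x s. 0 \<le> ball_mass M x s"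
    using ball_mass_le1[OF P] by auto
  have rtm: "\<And>x. ball_mass M x r \<le> ball_mass M x t" using ball_mass_mono[OF P S rt(2)] .
  have ct: "AE x in M. c \<le> ball_mass M x t" using c(2) by eventually_elim (rule order_trans[OF _ rtm])
  have int_const: "\<And>k::real. integral\<^sup>L M (\<lambda>x. k) = k" by (simp add: prob_space)
  consider "q = 1" | "q > 1" | "q < 1" by linarith
  thus ?thesis
  proof cases
    case 1
    have bnd: "AE x in M. norm (ln (ball_mass M x s)) \<le> - ln c" if "AE x in M. c \<le> ball_mass M x s" for s
      using that
    proof (rule AE_mp, intro AE_I2 impI)
      fix x assume h: "c \<le> ball_mass M x s"
      have "ln c \<le> ln (ball_mass M x s)" using h c(1) by simp
      moreover have "ln (ball_mass M x s) \<le> 0" using le1[of x s] h c(1) by simp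
      ultimately show "norm (ln (ball_mass M x s)) \<le> - ln c" by simp
    qed
    have ir: "integrable M (\<lambda>x. ln (ball_mass M x r))"
      by (rule integrable_const_bound[OF bnd[OF c(2)]]) (use mr in measurable)
    have it: "integrable M (\<lambda>x. ln (ball_mass M x t))"
      by (rule integrable_const_bound[OF bnd[OF ct]]) (use mt in measurable)
    have "I_mu M r 1 \<le> I_mu M t 1" unfolding I_mu_def
      using c(2) by (auto intro!: integral_mono_AE[OF ir it] elim!: AE_mp
                     intro: ln_mono rtm order.strict_trans2[OF c(1)])
    thus ?thesis using 1 by simp
  next
    case 2
    have bnd: "AE x in M. norm (ball_mass M x s powr (q - 1)) \<le> 1" for s
    proof (intro AE_I2)
      fix x
      have "ball_mass M x s powr (q - 1) \<le> 1 powr (q - 1)"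
        using 2 ge0 le1 by (intro powr_mono2) auto
      thus "norm (ball_mass M x s powr (q - 1)) \<le> 1" by simp
    qed
    have ir: "integrable M (\<lambda>x. ball_mass M x r powr (q - 1))"
      by (rule integrable_const_bound[OF bnd]) (use mr in measurable)
    have it: "integrable M (\<lambda>x. ball_mass M x t powr (q - 1))"
      by (rule integrable_const_bound[OF bnd]) (use mt in measurable)
    have mono: "(\<integral>x. ball_mass M x r powr (q - 1) \<partial>M) \<le> (\<integral>x. ball_mass M x t powr (q - 1) \<partial>M)"
      using 2 ge0 rtm by (intro integral_mono_AE[OF ir it] AE_I2 powr_mono2) auto
    have "c powr (q - 1) \<le> (\<integral>x. ball_mass M x r powr (q - 1) \<partial>M)"
    proof -
      have "integral\<^sup>L M (\<lambda>x. c powr (q - 1)) \<le> (\<integral>x. ball_mass M x r powr (q - 1) \<partial>M)"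
        using c(2)
      proof (intro integral_mono_AE[OF _ ir], simp, elim AE_mp, intro AE_I2 impI)
        fix x assume "c \<le> ball_mass M x r"
        thus "c powr (q - 1) \<le> ball_mass M x r powr (q - 1)"
          using 2 c(1) by (intro powr_mono2) auto
      qed
      thus ?thesis by (simp add: prob_space)
    qed
    hence pos: "0 < (\<integral>x. ball_mass M x r powr (q - 1) \<partial>M)" using c(1)
      by (smt (verit) powr_gt_zero)
    have "ln (I_mu M r q) \<le> ln (I_mu M t q)" unfolding I_mu_def using 2 pos mono by simp
    thus ?thesis using 2 by (simp add: divide_right_mono)
  next
    case 3
    have bnd: "AE x in M. norm (ball_mass M x s powr (q - 1)) \<le> c powr (q - 1)"
      if "AE x in M. c \<le> ball_mass M x s" for s
      using that
    proof (rule AE_mp, intro AE_I2 impI)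
      fix x assume h: "c \<le> ball_mass M x s"
      have "ball_mass M x s powr (q - 1) \<le> c powr (q - 1)"
        using 3 h c(1) by (intro powr_mono2') auto
      thus "norm (ball_mass M x s powr (q - 1)) \<le> c powr (q - 1)" by simp
    qed
    have ir: "integrable M (\<lambda>x. ball_mass M x r powr (q - 1))"
      by (rule integrable_const_bound[OF bnd[OF c(2)]]) (use mr in measurable)
    have it: "integrable M (\<lambda>x. ball_mass M x t powr (q - 1))"
      by (rule integrable_const_bound[OF bnd[OF ct]]) (use mt in measurable)
    have mono: "(\<integral>x. ball_mass M x t powr (q - 1) \<partial>M) \<le> (\<integral>x. ball_mass M x r powr (q - 1) \<partial>M)"
      using c(2)
    proof (intro integral_mono_AE[OF it ir], elim AE_mp, intro AE_I2 impI)
      fix x assume "c \<le> ball_mass M x r"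
      thus "ball_mass M x t powr (q - 1) \<le> ball_mass M x r powr (q - 1)"
        using 3 c(1) rtm[of x] by (intro powr_mono2') auto
    qed
    have "1 \<le> (\<integral>x. ball_mass M x t powr (q - 1) \<partial>M)"
    proof -
      have "integral\<^sup>L M (\<lambda>x. 1) \<le> (\<integral>x. ball_mass M x t powr (q - 1) \<partial>M)"
        using ct
      proof (intro integral_mono_AE[OF _ it], simp, elim AE_mp, intro AE_I2 impI)
        fix x assume h: "c \<le> ball_mass M x t"
        have "1 powr (q - 1) \<le> ball_mass M x t powr (q - 1)"
          using 3 h c(1) le1[of x t] by (intro powr_mono2') auto
        thus "1 \<le> ball_mass M x t powr (q - 1)" by simp
      qed
      thus ?thesis by (simp add: prob_space)
    qed
    hence pos: "0 < (\<integral>x. ball_mass M x t powr (q - 1) \<partial>M)" by simp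
    have "ln (I_mu M t q) \<le> ln (I_mu M r q)" unfolding I_mu_def using 3 pos mono by simp
    thus ?thesis using 3 by (simp add: divide_right_mono_neg)
  qed
qed


theorem proposition7p3:
  fixes K :: "'a::euclidean_space set" and M :: "'a measure" and q \<tau> :: real
  assumes "compact K"
    and "prob_space M"
    and "sets M = sets (restrict_space borel K)"
    and "lower_D M q < ereal \<tau>" and "ereal \<tau> < upper_D M q"
  shows "\<exists>r :: nat \<Rightarrow> real. (\<forall>n. 0 < r n) \<and> r \<longlonglongrightarrow> 0 \<and>
           (\<lambda>n. dim_quot M q (r n)) \<longlonglongrightarrow> \<tau>"
proof -
  define G where "G r = (if q = 1 then I_mu M r 1 else ln (I_mu M r q) / (q - 1))" for r
  have dq: "dim_quot M q r = G r / ln r" for r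
    unfolding dim_quot_def G_def by (simp add: divide_divide_eq_left mult.commute)
  have mono: "\<And>r t. 0 < r \<Longrightarrow> r \<le> t \<Longrightarrow> G r \<le> G t"
    unfolding G_def by (rule G_mono[OF assms(1-3)])
  have lo: "Liminf (at_right 0) (\<lambda>r. ereal (G r / ln r)) < ereal \<tau>"
    using assms(4) unfolding lower_D_def dq .
  have up: "ereal \<tau> < Limsup (at_right 0) (\<lambda>r. ereal (G r / ln r))"
    using assms(5) unfolding upper_D_def dq .
  show ?thesis using abstract_seq[OF mono lo up] unfolding dq .
qed

end
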